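(* Let $F=P_{\ell_1}\cup\cdots\cup P_{\ell_k}$ be a linear forest with $k\ge2$, $\ell_1\ge\cdots\ge\ell_k\ge2$ and $\ell_i\ne 3$ for all $i$. If the graph $P_{2\delta_F+1}\cup P_{\delta_F}$ is $F$-free, then either $F\in\{5P_5,\ 2P_\ell,\ P_{\ell+1}\cup P_\ell\}$ for some integer $\ell$, or $F\in\{P_{\ell+2}\cup P_\ell,\ 2P_\ell\cup P_2\}$ for some odd integer $\ell$.
   Context: $P_m$ is the path on $m$ vertices; $G\cup H$ is disjoint union and $tG$ is $t$ disjoint copies of $G$. $\delta_F=\sum_{i=1}^k\lfloor \ell_i/2\rfloor-1$. A graph is $F$-free if it has no subgraph isomorphic to $F$. *)

theory Defs
  imports Main
begin

text \<open>Simple graphs are given by a vertex set and a symmetric, irreflexive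
adjacency relation.\<close>

definition subgraph_of ::
  "'a set \<Rightarrow> ('a \<Rightarrow> 'a \<Rightarrow> bool) \<Rightarrow> 'b set \<Rightarrow> ('b \<Rightarrow> 'b \<Rightarrow> bool) \<Rightarrow> bool" where
  "subgraph_of VF EF VG EG \<longleftrightarrow>
     (\<exists>f. inj_on f VF \<and> f ` VF \<subseteq> VG \<and>
          (\<forall>u\<in>VF. \<forall>v\<in>VF. EF u v \<longrightarrow> EG (f u) (f v)))"

text \<open>The linear forest  P_{ls!0} \<union> ... \<union> P_{ls!(k-1)}: vertex (i,j) is the
j-th vertex of the i-th path (which has ls!i vertices).\<close>

definition lf_verts :: "nat list \<Rightarrow> (nat \<times> nat) set" where
  "lf_verts ls = {(i, j). i < length ls \<and> j < ls ! i}"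

definition lf_edge :: "nat list \<Rightarrow> nat \<times> nat \<Rightarrow> nat \<times> nat \<Rightarrow> bool" where
  "lf_edge ls u v \<longleftrightarrow> u \<in> lf_verts ls \<and> v \<in> lf_verts ls \<and> fst u = fst v \<and>
     (snd v = snd u + 1 \<or> snd u = snd v + 1)"

definition lf_free :: "nat list \<Rightarrow> nat list \<Rightarrow> bool" where
  "lf_free ms ls \<longleftrightarrow> \<not> subgraph_of (lf_verts ls) (lf_edge ls) (lf_verts ms) (lf_edge ms)"

definition delta_F :: "nat list \<Rightarrow> nat" where
  "delta_F ls = (\<Sum>l\<leftarrow>ls. l div 2) - 1"

end

theory Submission
  imports Defs
begin

lemma off_step:
  fixes w :: "nat \<Rightarrow> nat"
  assumes "finite J" "i \<in> J" "{x\<in>J. x < i} \<union> {i} \<subseteq> K" "K \<subseteq> J"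
  shows "sum w {x\<in>J. x < i} + w i \<le> sum w K"
proof -
  have "sum w {x\<in>J. x < i} + w i = sum w ({x\<in>J. x < i} \<union> {i})"
    using assms(1) by (subst sum.union_disjoint) auto
  also have "\<dots> \<le> sum w K"
    using assms by (intro sum_mono2) (auto intro: finite_subset)
  finally show ?thesis .
qed

lemma off_lt:
  fixes w :: "nat \<Rightarrow> nat"
  assumes "finite J" "i \<in> J" "i < i'"
  shows "sum w {x\<in>J. x < i} + w i \<le> sum w {x\<in>J. x < i'}"
  using assms by (intro off_step) auto

lemma off_tot:
  fixes w :: "nat \<Rightarrow> nat"
  assumes "finite J" "i \<in> J"
  shows "sum w {x\<in>J. x < i} + w i \<le> sum w J"
  using assms by (intro off_step) auto

lemma embed:
  fixes ls :: "nat list"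
  assumes I: "I \<subseteq> {..<length ls}"
    and s1: "(\<Sum>i\<in>I. ls!i) \<le> m1"
    and s0: "(\<Sum>i\<in>{..<length ls}-I. ls!i) \<le> m0"
  shows "subgraph_of (lf_verts ls) (lf_edge ls) (lf_verts [m0,m1]) (lf_edge [m0,m1])"
proof -
  define J where "J = {..<length ls} - I"
  define w where "w = (\<lambda>i. ls!i)"
  define off where "off = (\<lambda>A i. sum w {x\<in>A. x < i})"
  define f where "f = (\<lambda>(i::nat, j::nat). if i \<in> I then (1::nat, off I i + j) else (0, off J i + j))"
  have fI: "finite I" using I finite_subset by blast
  have fJ: "finite J" unfolding J_def by simp
  have cI: "(i,j) \<in> lf_verts ls \<Longrightarrow> i \<in> I \<Longrightarrow> off I i + j < m1" for i j
    using off_tot[OF fI, of i w] s1 unfolding off_def w_def lf_verts_def by auto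
  have cJ: "(i,j) \<in> lf_verts ls \<Longrightarrow> i \<notin> I \<Longrightarrow> off J i + j < m0" for i j
    using off_tot[OF fJ, of i w] s0 unfolding off_def w_def lf_verts_def J_def by auto
  have inj: "inj_on f (lf_verts ls)"
  proof (rule inj_onI)
    fix u v assume u: "u \<in> lf_verts ls" and v: "v \<in> lf_verts ls" and e: "f u = f v"
    obtain i j where uu: "u = (i,j)" by fastforce
    obtain i' j' where vv: "v = (i',j')" by fastforce
    have ji: "j < w i" "j' < w i'" using u v uu vv unfolding lf_verts_def w_def by auto
    have key: "i = i'" if A: "i \<in> A" "i' \<in> A" "finite A" "off A i + j = off A i' + j'" for A
    proof (rule ccontr)
      assume "i \<noteq> i'"
      then consider "i < i'" | "i' < i" by linarith
      then show False
      proof cases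
        case 1 then show ?thesis using off_lt[OF A(3) A(1) 1, of w] A(4) ji unfolding off_def by linarith
      next
        case 2 then show ?thesis using off_lt[OF A(3) A(2) 2, of w] A(4) ji unfolding off_def by linarith
      qed
    qed
    have "i = i'"
    proof (cases "i \<in> I")
      case True
      then have "i' \<in> I" using e uu vv unfolding f_def by (auto split: if_splits)
      then show ?thesis using key[OF True _ fI] e uu vv True unfolding f_def by auto
    next
      case False
      then have "i' \<notin> I" using e uu vv unfolding f_def by (auto split: if_splits)
      moreover have "i \<in> J" "i' \<in> J" using False \<open>i' \<notin> I\<close> u v uu vv unfolding J_def lf_verts_def by auto
      ultimately show ?thesis using key[OF _ _ fJ] e uu vv False unfolding f_def by auto
    qed
    then show "u = v" using e uu vv unfolding f_def by (auto split: if_splits)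
  qed
  have img: "f ` lf_verts ls \<subseteq> lf_verts [m0,m1]"
  proof
    fix y assume "y \<in> f ` lf_verts ls"
    then obtain i j where ij: "(i,j) \<in> lf_verts ls" "y = f (i,j)" by auto
    show "y \<in> lf_verts [m0,m1]"
      using cI[OF ij(1)] cJ[OF ij(1)] ij(2) unfolding f_def lf_verts_def by auto
  qed
  have edges: "\<forall>u\<in>lf_verts ls. \<forall>v\<in>lf_verts ls. lf_edge ls u v \<longrightarrow> lf_edge [m0,m1] (f u) (f v)"
  proof (intro ballI impI)
    fix u v assume u: "u \<in> lf_verts ls" and v: "v \<in> lf_verts ls" and e: "lf_edge ls u v"
    obtain i j where uu: "u = (i,j)" by fastforce
    obtain i' j' where vv: "v = (i',j')" by fastforce
    have "i' = i" using e uu vv unfolding lf_edge_def by auto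
    then show "lf_edge [m0,m1] (f u) (f v)"
      using img u v e uu vv unfolding lf_edge_def f_def by auto
  qed
  show ?thesis unfolding subgraph_of_def using inj img edges by blast
qed

lemma pick:
  fixes w :: "nat \<Rightarrow> nat"
  assumes "finite A" "\<forall>i\<in>A. w i + L \<le> U + 1" "L \<le> sum w A" "1 \<le> L"
  shows "\<exists>T\<subseteq>A. L \<le> sum w T \<and> sum w T \<le> U"
  using assms
proof (induction A rule: finite_induct)
  case empty then show ?case by simp
next
  case (insert x F)
  show ?case
  proof (cases "L \<le> sum w F")
    case True
    then obtain T where "T \<subseteq> F" "L \<le> sum w T" "sum w T \<le> U" using insert by auto
    then show ?thesis by blast
  next
    case False
    have "sum w (insert x F) = w x + sum w F" using insert by simp
    then show ?thesis using False insert.prems by (intro exI[of _ "insert x F"]) auto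
  qed
qed



lemma aux1: "2 \<le> (v::nat) \<Longrightarrow> v \<noteq> 3 \<Longrightarrow> v mod 2 + 1 \<le> v div 2"
proof -
  assume a: "2 \<le> v" "v \<noteq> 3"
  show ?thesis
  proof (cases "v = 2")
    case True then show ?thesis by simp
  next
    case False
    then have "4 \<le> v" using a by linarith
    then have "4 div 2 \<le> v div 2" by (rule div_le_mono)
    moreover have "v mod 2 \<le> 1" by simp
    ultimately show ?thesis by simp
  qed
qed

lemma dm: "(v::nat) = 2*(v div 2) + v mod 2" by simp
lemma m1: "(v::nat) mod 2 \<le> 1" by simp

lemma c1': fixes a b ha hb pa pb :: nat
  assumes "pa \<le> 1" "pb \<le> 1" "pa+1 \<le> ha" "pb+1 \<le> hb" "a = 2*ha+pa" "b = 2*hb+pb" "hb \<le> ha" "b \<le> a"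
  "ha + hb \<le> b + (pa + pb)"
  "\<not> (pa + pb + 1 \<le> b \<and> b + 1 \<le> ha + hb)"
  shows "a = b \<or> a = b + 1 \<or> (pb = 1 \<and> a = b + 2)" using assms by linarith
lemma c2': fixes a b x ha hb hx pa pb px :: nat
  assumes "pa \<le> 1" "pb \<le> 1" "px \<le> 1" "pa+1 \<le> ha" "pb+1 \<le> hb" "px+1 \<le> hx" "a = 2*ha+pa" "b = 2*hb+pb" "x = 2*hx+px" "hb \<le> ha" "b \<le> a" "x \<le> b"
  "ha + hb + hx \<le> b + (pa + pb + px)"
  "\<not> (pa + pb + px + 1 \<le> b \<and> b + 1 \<le> ha + hb + hx)"
  shows "pb = 1 \<and> a = b \<and> x = 2" using assms by linarith
lemma c3': fixes b ha hb hx hy pa pb px py :: nat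
  assumes "pa \<le> 1" "pb \<le> 1" "px \<le> 1" "py \<le> 1" "pa+1 \<le> ha" "pb+1 \<le> hb" "px+1 \<le> hx" "py+1 \<le> hy" "b = 2*hb+pb" "hb \<le> ha"
  "ha+hb+hx+hy \<le> b + (pa+pb+px+py)"
  "\<not>(pa+pb+px+py+1 \<le> b \<and> b+1 \<le> ha+hb+hx+hy)"
  shows False using assms by linarith
lemma c4'': fixes ha hb hx hy hz pa pb px py pz :: nat
  assumes "pa \<le> 1" "pb \<le> 1" "px \<le> 1" "py \<le> 1" "pz \<le> 1" "pa+1 \<le> ha" "pb+1 \<le> hb" "px+1 \<le> hx" "py+1 \<le> hy" "pz+1 \<le> hz" "hb \<le> ha"
  "ha+hb+hx+hy+hz \<le> 2*hb+pb + (pa+pb+px+py+pz)"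
  "\<not>(pa+pb+px+py+pz+1 \<le> 2*hb+pb \<and> 2*hb+pb+1 \<le> ha+hb+hx+hy+hz)"
  shows "ha = 2 \<and> hb = 2 \<and> hx = 2 \<and> hy = 2 \<and> hz = 2 \<and> pa = 1 \<and> pb = 1 \<and> px = 1 \<and> py = 1 \<and> pz = 1" using assms by linarith
lemma c4': fixes a b x y z ha hb hx hy hz pa pb px py pz :: nat
  assumes "pa \<le> 1" "pb \<le> 1" "px \<le> 1" "py \<le> 1" "pz \<le> 1" "pa+1 \<le> ha" "pb+1 \<le> hb" "px+1 \<le> hx" "py+1 \<le> hy" "pz+1 \<le> hz"
   "a = 2*ha+pa" "b = 2*hb+pb" "x = 2*hx+px" "y = 2*hy+py" "z = 2*hz+pz" "hb \<le> ha"
  "ha+hb+hx+hy+hz \<le> b + (pa+pb+px+py+pz)"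
  "\<not>(pa+pb+px+py+pz+1 \<le> b \<and> b+1 \<le> ha+hb+hx+hy+hz)"
  shows "a = 5 \<and> b = 5 \<and> x = 5 \<and> y = 5 \<and> z = 5"
proof -
  have "ha = 2 \<and> hb = 2 \<and> hx = 2 \<and> hy = 2 \<and> hz = 2 \<and> pa = 1 \<and> pb = 1 \<and> px = 1 \<and> py = 1 \<and> pz = 1"
    by (rule c4''[OF assms(1-10,16)]) (use assms(12,17,18) in simp_all)
  then show ?thesis using assms(11-15) by simp
qed

lemma dle: "(b::nat) \<le> a \<Longrightarrow> b div 2 \<le> a div 2" by (rule div_le_mono)

lemma c1: fixes a b :: nat assumes "b \<le> a" "2 \<le> a" "a \<noteq> 3" "2 \<le> b" "b \<noteq> 3"
 "a div 2 + b div 2 \<le> b + (a mod 2 + b mod 2)"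
 "\<not> (a mod 2 + b mod 2 + 1 \<le> b \<and> b + 1 \<le> a div 2 + b div 2)"
 shows "a = b \<or> a = b + 1 \<or> (odd b \<and> a = b + 2)"
  using c1'[OF m1 m1 aux1[OF assms(2,3)] aux1[OF assms(4,5)] dm dm dle[OF assms(1)] assms(1,6,7)]
  by (auto simp: odd_iff_mod_2_eq_one)
lemma c2: fixes a b x :: nat assumes "b \<le> a" "2 \<le> a" "a \<noteq> 3" "2 \<le> b" "b \<noteq> 3" "x \<le> b" "2 \<le> x" "x \<noteq> 3"
 "a div 2 + b div 2 + x div 2 \<le> b + (a mod 2 + b mod 2 + x mod 2)"
 "\<not> (a mod 2 + b mod 2 + x mod 2 + 1 \<le> b \<and> b + 1 \<le> a div 2 + b div 2 + x div 2)"
 shows "odd b \<and> a = b \<and> x = 2"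
  using c2'[OF m1 m1 m1 aux1[OF assms(2,3)] aux1[OF assms(4,5)] aux1[OF assms(7,8)] dm dm dm dle[OF assms(1)] assms(1,6,9,10)]
  by (auto simp: odd_iff_mod_2_eq_one)
lemma c3: fixes a b x y :: nat assumes "b \<le> a" "2 \<le> a" "a \<noteq> 3" "2 \<le> b" "b \<noteq> 3" "x \<le> b" "2 \<le> x" "x \<noteq> 3" "y \<le> b" "2 \<le> y" "y \<noteq> 3"
 "a div 2 + b div 2 + x div 2 + y div 2 \<le> b + (a mod 2 + b mod 2 + x mod 2 + y mod 2)"
 "\<not> (a mod 2 + b mod 2 + x mod 2 + y mod 2 + 1 \<le> b \<and> b + 1 \<le> a div 2 + b div 2 + x div 2 + y div 2)"
 shows False
  by (rule c3'[OF m1 m1 m1 m1 aux1[OF assms(2,3)] aux1[OF assms(4,5)] aux1[OF assms(7,8)] aux1[OF assms(10,11)] dm dle[OF assms(1)] assms(12,13)])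
lemma c4: fixes a b x y z :: nat assumes "b \<le> a" "2 \<le> a" "a \<noteq> 3" "2 \<le> b" "b \<noteq> 3" "x \<le> b" "2 \<le> x" "x \<noteq> 3" "y \<le> b" "2 \<le> y" "y \<noteq> 3" "z \<le> b" "2 \<le> z" "z \<noteq> 3"
 "a div 2 + b div 2 + x div 2 + y div 2 + z div 2 \<le> b + (a mod 2 + b mod 2 + x mod 2 + y mod 2 + z mod 2)"
 "\<not> (a mod 2 + b mod 2 + x mod 2 + y mod 2 + z mod 2 + 1 \<le> b \<and> b + 1 \<le> a div 2 + b div 2 + x div 2 + y div 2 + z div 2)"
 shows "a = 5 \<and> b = 5 \<and> x = 5 \<and> y = 5 \<and> z = 5"
  by (rule c4'[OF m1 m1 m1 m1 m1 aux1[OF assms(2,3)] aux1[OF assms(4,5)] aux1[OF assms(7,8)] aux1[OF assms(10,11)] aux1[OF assms(13,14)] dm dm dm dm dm dle[OF assms(1)] assms(15,16)])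

lemma aux: "2 \<le> (v::nat) \<Longrightarrow> v \<noteq> 3 \<Longrightarrow> v mod 2 + 1 \<le> v div 2 \<and> v = 2*(v div 2) + v mod 2 \<and> v mod 2 \<le> 1"
  using aux1[of v] by simp

lemma rest_bound:
  "\<forall>x\<in>set xs. 2 \<le> x \<and> x \<noteq> (3::nat) \<Longrightarrow>
   sum_list (map (\<lambda>l. l mod 2) xs) + length xs \<le> sum_list (map (\<lambda>l. l div 2) xs)"
proof (induction xs)
  case Nil then show ?case by simp
next
  case (Cons x xs)
  have "2 \<le> x" "x \<noteq> 3" using Cons.prems by auto
  then have "x mod 2 + 1 \<le> x div 2" by (rule aux1)
  then show ?case using Cons by simp
qed



lemma len3: "length (xs::'a list) \<le> 3 \<Longrightarrow> xs = [] \<or> (\<exists>x. xs=[x]) \<or> (\<exists>x y. xs=[x,y]) \<or> (\<exists>x y z. xs=[x,y,z])"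
  by (cases xs; cases "tl xs"; cases "tl (tl xs)"; cases "tl (tl (tl xs))"; simp)

lemma case3:
  fixes a b :: nat
  assumes ab: "b \<le> a" "2 \<le> a" "a \<noteq> 3" "2 \<le> b" "b \<noteq> 3"
    and r: "\<forall>x\<in>set rest. x \<le> b \<and> 2 \<le> x \<and> x \<noteq> 3"
    and h: "sum_list (map (\<lambda>l. l div 2) (a#b#rest)) \<le> b + sum_list (map (\<lambda>l. l mod 2) (a#b#rest))"
    and n: "\<not> (sum_list (map (\<lambda>l. l mod 2) (a#b#rest)) + 1 \<le> b \<and> b + 1 \<le> sum_list (map (\<lambda>l. l div 2) (a#b#rest)))"
  shows "a#b#rest = replicate 5 5
      \<or> (\<exists>l. a#b#rest = [l, l] \<or> a#b#rest = [l + 1, l])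
      \<or> (\<exists>l. odd l \<and> (a#b#rest = [l + 2, l] \<or> a#b#rest = [l, l, 2]))"
proof -
  have rb: "sum_list (map (\<lambda>l. l mod 2) rest) + length rest \<le> sum_list (map (\<lambda>l. l div 2) rest)"
    using rest_bound r by blast
  have "length rest \<le> 3" using rb h ab by simp
  then consider "rest = []" | x where "rest = [x]" | x y where "rest = [x,y]" | x y z where "rest = [x,y,z]"
    using len3 by blast
  then show ?thesis
  proof cases
    case 1
    have h': "a div 2 + b div 2 \<le> b + (a mod 2 + b mod 2)" using h 1 by (simp add: ac_simps)
    have n': "\<not> (a mod 2 + b mod 2 + 1 \<le> b \<and> b + 1 \<le> a div 2 + b div 2)" using n 1 by (simp add: ac_simps)
    have "a = b \<or> a = b + 1 \<or> (odd b \<and> a = b + 2)" using c1[OF ab h' n'] .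
    then show ?thesis using 1 by auto
  next
    case (2 x)
    then have xx: "x \<le> b" "2 \<le> x" "x \<noteq> 3" using r by auto
    have h': "a div 2 + b div 2 + x div 2 \<le> b + (a mod 2 + b mod 2 + x mod 2)" using h 2 by (simp add: ac_simps)
    have n': "\<not> (a mod 2 + b mod 2 + x mod 2 + 1 \<le> b \<and> b + 1 \<le> a div 2 + b div 2 + x div 2)" using n 2 by (simp add: ac_simps)
    have "odd b \<and> a = b \<and> x = 2" using c2[OF ab xx h' n'] .
    then show ?thesis using 2 by auto
  next
    case (3 x y)
    then have xx: "x \<le> b" "2 \<le> x" "x \<noteq> 3" "y \<le> b" "2 \<le> y" "y \<noteq> 3" using r by auto
    have h': "a div 2 + b div 2 + x div 2 + y div 2 \<le> b + (a mod 2 + b mod 2 + x mod 2 + y mod 2)" using h 3 by (simp add: ac_simps)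
    have n': "\<not> (a mod 2 + b mod 2 + x mod 2 + y mod 2 + 1 \<le> b \<and> b + 1 \<le> a div 2 + b div 2 + x div 2 + y div 2)" using n 3 by (simp add: ac_simps)
    show ?thesis using c3[OF ab xx h' n'] by simp
  next
    case (4 x y z)
    then have xx: "x \<le> b" "2 \<le> x" "x \<noteq> 3" "y \<le> b" "2 \<le> y" "y \<noteq> 3" "z \<le> b" "2 \<le> z" "z \<noteq> 3" using r by auto
    have h': "a div 2 + b div 2 + x div 2 + y div 2 + z div 2 \<le> b + (a mod 2 + b mod 2 + x mod 2 + y mod 2 + z mod 2)" using h 4 by (simp add: ac_simps)
    have n': "\<not> (a mod 2 + b mod 2 + x mod 2 + y mod 2 + z mod 2 + 1 \<le> b \<and> b + 1 \<le> a div 2 + b div 2 + x div 2 + y div 2 + z div 2)" using n 4 by (simp add: ac_simps)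
    have "a = 5 \<and> b = 5 \<and> x = 5 \<and> y = 5 \<and> z = 5" using c4[OF ab xx h' n'] .
    then show ?thesis using 4 by (simp add: numeral_eq_Suc)
  qed
qed


lemma aux2: "2 \<le> (v::nat) \<Longrightarrow> v \<noteq> 3 \<Longrightarrow> v mod 2 + 2 \<le> v"
proof -
  assume "2 \<le> v" "v \<noteq> 3"
  then have "v mod 2 + 1 \<le> v div 2" "v = 2*(v div 2) + v mod 2" by (rule aux1, simp)
  then show ?thesis by linarith
qed

lemma lin1: "(oo::nat) = p + X \<Longrightarrow> Y \<le> Z \<Longrightarrow> 1 \<le> c \<Longrightarrow> p \<le> 1 \<Longrightarrow> Y = X + c * 2 \<Longrightarrow> oo + 1 \<le> Z"
  by linarith

lemma sum_list_nth: "sum_list (map f xs) = (\<Sum>i<length xs. f (xs!i))"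
  by (simp add: sum_list_sum_nth atLeast0LessThan)

theorem mainTheorem4:
  fixes ls :: "nat list"
  assumes "length ls \<ge> 2"
    and "sorted_wrt (\<ge>) ls"
    and "\<forall>l\<in>set ls. l \<ge> 2"
    and "\<forall>l\<in>set ls. l \<noteq> 3"
    and "lf_free [2 * delta_F ls + 1, delta_F ls] ls"
  shows "ls = replicate 5 5
      \<or> (\<exists>l. ls = [l, l] \<or> ls = [l + 1, l])
      \<or> (\<exists>l. odd l \<and> (ls = [l + 2, l] \<or> ls = [l, l, 2]))"
proof (rule ccontr)
  assume nc: "\<not> ?thesis"
  obtain a b rest where ls: "ls = a#b#rest" using assms(1)
    by (cases ls; cases "tl ls") auto
  define k where "k = length ls"
  define s where "s = sum_list (map (\<lambda>l. l div 2) ls)"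
  define oo where "oo = sum_list (map (\<lambda>l. l mod 2) ls)"
  have el: "2 \<le> ls!i \<and> ls!i \<noteq> 3" if "i < k" for i
    using assms(3,4) nth_mem[of i ls] that unfolding k_def by auto
  have s_eq: "s = (\<Sum>i<k. ls!i div 2)" unfolding s_def k_def by (rule sum_list_nth)
  have o_eq: "oo = (\<Sum>i<k. ls!i mod 2)" unfolding oo_def k_def by (rule sum_list_nth)
  have n_eq: "(\<Sum>i<k. ls!i) = 2*s + oo"
  proof -
    have "(\<Sum>i<k. ls!i) = (\<Sum>i<k. 2*(ls!i div 2) + ls!i mod 2)"
      by (rule sum.cong) (simp_all add: mult_div_mod_eq)
    also have "\<dots> = 2*s + oo" unfolding s_eq o_eq by (simp only: sum.distrib sum_distrib_left)
    finally show ?thesis .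
  qed
  have k2: "2 \<le> k" using assms(1) k_def by simp
  have s1: "1 \<le> s" using assms(3) ls unfolding s_def by auto
  have b1: "ls!1 = b" using ls by simp
  have good: "\<exists>I \<subseteq> {..<k}. oo + 1 \<le> (\<Sum>i\<in>I. ls!i) \<and> (\<Sum>i\<in>I. ls!i) \<le> s - 1"
  proof (cases "b + oo < s")
    case True
    define A where "A = {1..<k}"
    have le1: "ls!i \<le> b" if "i \<in> A" for i
    proof (cases "i = 1")
      case True then show ?thesis using b1 by simp
    next
      case False
      then have "1 < i" "i < k" using that A_def by auto
      then show ?thesis using sorted_wrt_nth_less[OF assms(2), of 1 i] b1 k_def by auto
    qed
    have split: "{..<k} = insert 0 A" using k2 A_def by auto
    have "oo = ls!0 mod 2 + (\<Sum>i\<in>A. ls!i mod 2)" unfolding o_eq split A_def by simp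
    moreover have "(\<Sum>i\<in>A. ls!i mod 2 + 2) \<le> (\<Sum>i\<in>A. ls!i)"
    proof (rule sum_mono)
      fix i assume "i \<in> A"
      then have "2 \<le> ls!i" "ls!i \<noteq> 3" using el A_def by auto
      then show "ls!i mod 2 + 2 \<le> ls!i" by (rule aux2)
    qed
    moreover have "card A \<ge> 1" using k2 A_def by simp
    moreover have "ls!0 mod 2 \<le> 1" by simp
    moreover have "(\<Sum>i\<in>A. ls!i mod 2 + 2) = (\<Sum>i\<in>A. ls!i mod 2) + card A * 2"
      by (simp only: sum.distrib) simp
    ultimately have lo: "oo + 1 \<le> (\<Sum>i\<in>A. ls!i)" by (rule lin1)
    have "\<exists>T\<subseteq>A. oo + 1 \<le> (\<Sum>i\<in>T. ls!i) \<and> (\<Sum>i\<in>T. ls!i) \<le> s - 1"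
    proof (rule pick)
      show "finite A" using A_def by simp
      show "oo + 1 \<le> (\<Sum>i\<in>A. ls!i)" by (rule lo)
      show "1 \<le> oo + 1" by simp
      show "\<forall>i\<in>A. ls!i + (oo + 1) \<le> s - 1 + 1"
      proof
        fix i assume "i \<in> A"
        then have "ls!i \<le> b" by (rule le1)
        then show "ls!i + (oo + 1) \<le> s - 1 + 1" using True by linarith
      qed
    qed
    then obtain T where T: "T \<subseteq> A" "oo + 1 \<le> (\<Sum>i\<in>T. ls!i)" "(\<Sum>i\<in>T. ls!i) \<le> s - 1" by blast
    have "T \<subseteq> {..<k}" using T(1) A_def by auto
    then show ?thesis using T(2,3) by blast
  next
    case False
    have ab: "b \<le> a" "2 \<le> a" "a \<noteq> 3" "2 \<le> b" "b \<noteq> 3" using assms(2,3,4) ls by auto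
    have r: "\<forall>x\<in>set rest. x \<le> b \<and> 2 \<le> x \<and> x \<noteq> 3" using assms(2,3,4) ls by auto
    have h: "sum_list (map (\<lambda>l. l div 2) (a#b#rest)) \<le> b + sum_list (map (\<lambda>l. l mod 2) (a#b#rest))"
      using False ls s_def oo_def by simp
    have "oo + 1 \<le> b \<and> b + 1 \<le> s"
    proof (rule ccontr)
      assume "\<not> (oo + 1 \<le> b \<and> b + 1 \<le> s)"
      then have n: "\<not> (sum_list (map (\<lambda>l. l mod 2) (a#b#rest)) + 1 \<le> b \<and> b + 1 \<le> sum_list (map (\<lambda>l. l div 2) (a#b#rest)))"
        using ls s_def oo_def by simp
      show False using case3[OF ab r h n] nc ls by simp
    qed
    then show ?thesis using b1 k2 by (intro exI[of _ "{1}"]) auto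
  qed
  then obtain I where I: "I \<subseteq> {..<k}" "oo + 1 \<le> (\<Sum>i\<in>I. ls!i)" "(\<Sum>i\<in>I. ls!i) \<le> s - 1" by blast
  have d: "delta_F ls = s - 1" unfolding delta_F_def s_def by simp
  have c: "(\<Sum>i\<in>{..<k}-I. ls!i) = (\<Sum>i<k. ls!i) - (\<Sum>i\<in>I. ls!i)"
    using I(1) by (intro sum_diff_nat) (auto intro: finite_subset)
  have c2: "(\<Sum>i\<in>{..<k}-I. ls!i) \<le> 2 * delta_F ls + 1"
    unfolding c n_eq d using I s1 by linarith
  have "subgraph_of (lf_verts ls) (lf_edge ls) (lf_verts [2 * delta_F ls + 1, delta_F ls]) (lf_edge [2 * delta_F ls + 1, delta_F ls])"
    by (rule embed) (use I c2 d k_def in auto)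
  then show False using assms(5) unfolding lf_free_def by simp
qed

end
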